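(* Let $E$ be an arbitrary directed graph. For an admissible pair $(H,S)$ of $E$ let $(H,S)^\bot=(H^\bot,S^\bot)$ with $H^\bot=E^0-R(H)$ and $S^\bot=B_{H^\bot}-S$, and write $(H^{\bot\bot},S^{\bot\bot})=((H,S)^\bot)^\bot$, $(H^{\bot\bot\bot},S^{\bot\bot\bot})=(((H,S)^\bot)^\bot)^\bot$. Then the operator $\bot$ is decreasing: $(H,S)\le(G,T)$ implies $(H^\bot,S^\bot)\ge(G^\bot,T^\bot)$ for any admissible pairs $(H,S),(G,T)$. Moreover, for all admissible pairs $(H,S),(G,T)$: (1) $(H,S)\le(H^{\bot\bot},S^{\bot\bot})$; (2) $(H,S)\le(G,T)$ implies $(H^{\bot\bot},S^{\bot\bot})\le(G^{\bot\bot},T^{\bot\bot})$; (3) $(H^{\bot\bot\bot},S^{\bot\bot\bot})=(H^\bot,S^\bot)$.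
   Context: Write $u\ge v$ if there is a path (possibly of length 0) from $u$ to $v$; $R(V)=\{u\in E^0\mid u\ge v$ for some $v\in V\}$. $H\subseteq E^0$ is hereditary if $\mathbf{r}(p)\in H$ for every path $p$ with $\mathbf{s}(p)\in H$; saturated if every regular vertex $v$ (emitting a nonzero finite number of edges) with $\mathbf{r}(\mathbf{s}^{-1}(v))\subseteq H$ is in $H$. For hereditary saturated $H$, $B_H=\{v\in E^0-H\mid v$ emits infinitely many edges and $\mathbf{s}^{-1}(v)\cap\mathbf{r}^{-1}(E^0-H)$ is nonempty and finite$\}$. An admissible pair is $(H,S)$ with $H$ hereditary and saturated and $S\subseteq B_H$. Admissible pairs are partially ordered by $(H,S)\le(G,T)$ iff $H\subseteq G$ and $S\subseteq G\cup T$. For $H$ hereditary saturated, $E^0-R(H)$ is hereditary saturated, so $(H^\bot,S^\bot)$ is admissible. *)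

theory Defs
  imports Main
begin

record ('v, 'e) dgraph =
  verts :: "'v set"
  edges :: "'e set"
  src   :: "'e \<Rightarrow> 'v"
  rng   :: "'e \<Rightarrow> 'v"

definition wf_dgraph :: "('v, 'e) dgraph \<Rightarrow> bool" where
  "wf_dgraph E \<longleftrightarrow> (\<forall>e \<in> edges E. src E e \<in> verts E \<and> rng E e \<in> verts E)"

fun is_path_from :: "('v, 'e) dgraph \<Rightarrow> 'v \<Rightarrow> 'e list \<Rightarrow> 'v \<Rightarrow> bool" where
  "is_path_from E u [] v \<longleftrightarrow> u \<in> verts E \<and> u = v"
| "is_path_from E u (e # es) v \<longleftrightarrow> e \<in> edges E \<and> src E e = u \<and> is_path_from E (rng E e) es v"

definition geq :: "('v, 'e) dgraph \<Rightarrow> 'v \<Rightarrow> 'v \<Rightarrow> bool" where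
  "geq E u v \<longleftrightarrow> (\<exists>p. is_path_from E u p v)"

definition Rset :: "('v, 'e) dgraph \<Rightarrow> 'v set \<Rightarrow> 'v set" where
  "Rset E V = {u \<in> verts E. \<exists>v \<in> V. geq E u v}"

definition hereditary :: "('v, 'e) dgraph \<Rightarrow> 'v set \<Rightarrow> bool" where
  "hereditary E H \<longleftrightarrow> H \<subseteq> verts E \<and> (\<forall>u p v. u \<in> H \<and> is_path_from E u p v \<longrightarrow> v \<in> H)"

definition emits :: "('v, 'e) dgraph \<Rightarrow> 'v \<Rightarrow> 'e set" where
  "emits E v = {e \<in> edges E. src E e = v}"

definition regular :: "('v, 'e) dgraph \<Rightarrow> 'v \<Rightarrow> bool" where
  "regular E v \<longleftrightarrow> v \<in> verts E \<and> emits E v \<noteq> {} \<and> finite (emits E v)"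

definition saturated :: "('v, 'e) dgraph \<Rightarrow> 'v set \<Rightarrow> bool" where
  "saturated E H \<longleftrightarrow> (\<forall>v. regular E v \<and> rng E ` emits E v \<subseteq> H \<longrightarrow> v \<in> H)"

definition breaking :: "('v, 'e) dgraph \<Rightarrow> 'v set \<Rightarrow> 'v set" where
  "breaking E H = {v \<in> verts E - H. infinite (emits E v) \<and>
      {e \<in> emits E v. rng E e \<in> verts E - H} \<noteq> {} \<and>
      finite {e \<in> emits E v. rng E e \<in> verts E - H}}"

definition admissible :: "('v, 'e) dgraph \<Rightarrow> 'v set \<times> 'v set \<Rightarrow> bool" where
  "admissible E P \<longleftrightarrow> hereditary E (fst P) \<and> saturated E (fst P) \<and> snd P \<subseteq> breaking E (fst P)"

definition adm_le :: "'v set \<times> 'v set \<Rightarrow> 'v set \<times> 'v set \<Rightarrow> bool" where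
  "adm_le P Q \<longleftrightarrow> fst P \<subseteq> fst Q \<and> snd P \<subseteq> fst Q \<union> snd Q"

definition perp :: "('v, 'e) dgraph \<Rightarrow> 'v set \<times> 'v set \<Rightarrow> 'v set \<times> 'v set" where
  "perp E P = (let Hp = verts E - Rset E (fst P) in (Hp, breaking E Hp - snd P))"

end

theory Submission
  imports Defs
begin

lemma path_verts: "is_path_from E u p v \<Longrightarrow> v \<in> verts E"
  by (induction p arbitrary: u) auto

lemma path_start: "wf_dgraph E \<Longrightarrow> is_path_from E u p v \<Longrightarrow> u \<in> verts E"
  by (cases p) (auto simp: wf_dgraph_def)

lemma path_app: "is_path_from E u p w \<Longrightarrow> is_path_from E w q v \<Longrightarrow> is_path_from E u (p @ q) v"
  by (induction p arbitrary: u) auto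

lemma Rset_sub: "Rset E X \<subseteq> verts E"
  unfolding Rset_def by auto

lemma Rset_mono: "X \<subseteq> Y \<Longrightarrow> Rset E X \<subseteq> Rset E Y"
  unfolding Rset_def by auto

lemma Rset_incl: "X \<subseteq> verts E \<Longrightarrow> X \<subseteq> Rset E X"
proof
  fix x assume "X \<subseteq> verts E" "x \<in> X"
  then have "is_path_from E x [] x" by auto
  then show "x \<in> Rset E X" using \<open>X \<subseteq> verts E\<close> \<open>x \<in> X\<close> unfolding Rset_def geq_def by blast
qed

lemma diff_diff_R: "verts E - (verts E - Rset E X) = Rset E X"
  using Rset_sub[of E X] by blast

lemma hered_perp: "hereditary E (verts E - Rset E X)"
  unfolding hereditary_def
proof (intro conjI allI impI)
  show "verts E - Rset E X \<subseteq> verts E" by blast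
next
  fix u p v assume a: "u \<in> verts E - Rset E X \<and> is_path_from E u p v"
  show "v \<in> verts E - Rset E X"
  proof (rule ccontr)
    assume "v \<notin> verts E - Rset E X"
    moreover have "v \<in> verts E" using a path_verts[of E u p v] by blast
    ultimately have "v \<in> Rset E X" by blast
    then obtain w q where "w \<in> X" "is_path_from E v q w" unfolding Rset_def geq_def by blast
    with a path_app[of E u p v q w] have "is_path_from E u (p @ q) w" by blast
    with a \<open>w \<in> X\<close> show False unfolding Rset_def geq_def by blast
  qed
qed

lemma edge_hered: "wf_dgraph E \<Longrightarrow> hereditary E H \<Longrightarrow> e \<in> edges E \<Longrightarrow> src E e \<in> H \<Longrightarrow> rng E e \<in> H"
proof -
  assume a: "wf_dgraph E" "hereditary E H" "e \<in> edges E" "src E e \<in> H"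
  then have "is_path_from E (src E e) [e] (rng E e)" unfolding wf_dgraph_def by simp
  then show ?thesis using a unfolding hereditary_def by blast
qed

lemma edge_R: "wf_dgraph E \<Longrightarrow> e \<in> edges E \<Longrightarrow> rng E e \<in> Rset E X \<Longrightarrow> src E e \<in> Rset E X"
proof -
  assume w: "wf_dgraph E" and e: "e \<in> edges E" and r: "rng E e \<in> Rset E X"
  then obtain x p where "x \<in> X" "is_path_from E (rng E e) p x" unfolding Rset_def geq_def by blast
  then have "is_path_from E (src E e) (e # p) x" using e by simp
  then show ?thesis using \<open>x \<in> X\<close> w e unfolding Rset_def geq_def wf_dgraph_def by blast
qed

lemma R_step: "wf_dgraph E \<Longrightarrow> u \<in> Rset E X \<Longrightarrow> u \<notin> X \<Longrightarrow> \<exists>e \<in> emits E u. rng E e \<in> Rset E X"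
proof -
  assume wf: "wf_dgraph E" and u: "u \<in> Rset E X" "u \<notin> X"
  then obtain x p where x: "x \<in> X" "is_path_from E u p x" unfolding Rset_def geq_def by blast
  show ?thesis
  proof (cases p)
    case Nil then show ?thesis using x u by simp
  next
    case (Cons e q)
    then have "e \<in> edges E" "src E e = u" "is_path_from E (rng E e) q x" using x by auto
    moreover have "rng E e \<in> verts E" using wf \<open>e \<in> edges E\<close> unfolding wf_dgraph_def by blast
    ultimately show ?thesis using x unfolding emits_def Rset_def geq_def by blast
  qed
qed

lemma H_disj: "hereditary E H \<Longrightarrow> H \<inter> Rset E (verts E - Rset E H) = {}"
proof (rule ccontr)
  assume h: "hereditary E H" and "H \<inter> Rset E (verts E - Rset E H) \<noteq> {}"
  then obtain u where u: "u \<in> H" "u \<in> Rset E (verts E - Rset E H)" by blast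
  then obtain w where w: "w \<in> verts E - Rset E H" "geq E u w" unfolding Rset_def by blast
  then obtain p where "is_path_from E u p w" unfolding geq_def by blast
  note u w this
  then have "w \<in> H" using h unfolding hereditary_def by blast
  then have "w \<in> Rset E H" using Rset_incl[of H E] h unfolding hereditary_def by blast
  then show False using \<open>w \<in> verts E - Rset E H\<close> by blast
qed

lemma perp_eq: "perp E (H, S) = (verts E - Rset E H, breaking E (verts E - Rset E H) - S)"
  unfolding perp_def Let_def by simp

lemma L0:
  assumes wf: "wf_dgraph E" and hG: "hereditary E G" and le: "adm_le (H, S) (G, T)"
  shows "adm_le (perp E (G, T)) (perp E (H, S))"
proof -
  have HG: "H \<subseteq> G" and SGT: "S \<subseteq> G \<union> T" using le unfolding adm_le_def by auto
  have RHG: "Rset E H \<subseteq> Rset E G" using Rset_mono[OF HG] .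
  have Gv: "G \<subseteq> verts E" using hG unfolding hereditary_def by blast
  have "breaking E (verts E - Rset E G) - T
     \<subseteq> (verts E - Rset E H) \<union> (breaking E (verts E - Rset E H) - S)"
  proof
    fix v assume v: "v \<in> breaking E (verts E - Rset E G) - T"
    show "v \<in> (verts E - Rset E H) \<union> (breaking E (verts E - Rset E H) - S)"
    proof (cases "v \<in> Rset E H")
      case False then show ?thesis using v unfolding breaking_def by blast
    next
      case True
      define A where "A = {e \<in> emits E v. rng E e \<in> verts E - (verts E - Rset E G)}"
      have inf: "infinite (emits E v)" and fA: "finite A" and vT: "v \<notin> T"
        using v unfolding breaking_def A_def by auto
      have vG: "v \<notin> G"
      proof
        assume "v \<in> G"
        then have "emits E v \<subseteq> A" unfolding A_def emits_def diff_diff_R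
          using edge_hered[OF wf hG] Gv Rset_incl[OF Gv] by blast
        then show False using inf fA finite_subset by blast
      qed
      have vS: "v \<notin> S" using SGT vG vT by blast
      have vH: "v \<notin> H" using vG HG by blast
      have sub: "{e \<in> emits E v. rng E e \<in> verts E - (verts E - Rset E H)} \<subseteq> A"
        unfolding A_def diff_diff_R using RHG by blast
      have ne: "{e \<in> emits E v. rng E e \<in> verts E - (verts E - Rset E H)} \<noteq> {}"
        unfolding diff_diff_R using R_step[OF wf True vH] by blast
      have "v \<in> breaking E (verts E - Rset E H)"
        unfolding breaking_def using True Rset_sub[of E H] inf ne finite_subset[OF sub fA] by auto
      then show ?thesis using vS by blast
    qed
  qed
  moreover have "verts E - Rset E G \<subseteq> verts E - Rset E H" using RHG by blast
  ultimately show ?thesis unfolding adm_le_def perp_eq by simp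
qed

lemma L1:
  assumes wf: "wf_dgraph E" and hH: "hereditary E H" and SB: "S \<subseteq> breaking E H"
  shows "adm_le (H, S) (perp E (perp E (H, S)))"
proof -
  define Hp where "Hp = verts E - Rset E H"
  define Hpp where "Hpp = verts E - Rset E Hp"
  have Hv: "H \<subseteq> verts E" using hH unfolding hereditary_def by blast
  have disj: "H \<inter> Rset E Hp = {}" using H_disj[OF hH] unfolding Hp_def .
  have H1: "H \<subseteq> Hpp" unfolding Hpp_def using disj Hv by blast
  have "S \<subseteq> Hpp \<union> (breaking E Hpp - (breaking E Hp - S))"
  proof
    fix v assume vS: "v \<in> S"
    show "v \<in> Hpp \<union> (breaking E Hpp - (breaking E Hp - S))"
    proof (cases "v \<in> Hpp")
      case True then show ?thesis by blast
    next
      case False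
      have vB: "v \<in> breaking E H" using vS SB by blast
      then have vverts: "v \<in> verts E" unfolding breaking_def by blast
      have vR: "v \<in> Rset E Hp" using False vverts unfolding Hpp_def by blast
      define C where "C = {e \<in> emits E v. rng E e \<in> verts E - H}"
      have vv: "v \<in> verts E - H" and inf: "infinite (emits E v)" and fC: "finite C"
        using vB unfolding breaking_def C_def by auto
      have "infinite (emits E v - C)" using inf fC by (metis Diff_infinite_finite)
      then obtain e where e: "e \<in> emits E v - C" using infinite_imp_nonempty by blast
      then have eE: "e \<in> edges E" "src E e = v" "rng E e \<notin> verts E - H"
        unfolding C_def emits_def by auto
      have "rng E e \<in> verts E" using wf eE(1) unfolding wf_dgraph_def by blast
      then have "rng E e \<in> H" using eE(3) by blast
      then have "rng E e \<in> Rset E H" using Rset_incl[OF Hv] by blast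
      then have "v \<in> Rset E H" using edge_R[OF wf eE(1)] eE(2) by simp
      then have vHp: "v \<notin> Hp" unfolding Hp_def by blast
      have ne: "{e \<in> emits E v. rng E e \<in> verts E - Hpp} \<noteq> {}"
        unfolding Hpp_def diff_diff_R using R_step[OF wf vR vHp] by blast
      have sub: "{e \<in> emits E v. rng E e \<in> verts E - Hpp} \<subseteq> C"
      proof
        fix x assume "x \<in> {e \<in> emits E v. rng E e \<in> verts E - Hpp}"
        then have "x \<in> emits E v" "rng E x \<in> Rset E Hp" unfolding Hpp_def diff_diff_R by auto
        moreover have "rng E x \<in> verts E" using Rset_sub[of E Hp] calculation(2) by blast
        moreover have "rng E x \<notin> H" using disj calculation(2) by blast
        ultimately show "x \<in> C" unfolding C_def by blast
      qed
      have vnot: "v \<in> verts E - Hpp" using vverts False by blast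
      have "v \<in> breaking E Hpp"
        unfolding breaking_def using vnot inf ne finite_subset[OF sub fC] by blast
      then show ?thesis using vS by blast
    qed
  qed
  then show ?thesis using H1 unfolding adm_le_def perp_eq Hp_def[symmetric] Hpp_def[symmetric]
    by simp
qed

lemma perp_hered: "hereditary E (fst (perp E P))"
  unfolding perp_def Let_def using hered_perp by simp

lemma perp_break: "snd (perp E P) \<subseteq> breaking E (fst (perp E P))"
  unfolding perp_def Let_def by auto

lemma break_disj: "breaking E X \<inter> X = {}"
  unfolding breaking_def by blast

lemma L0': "wf_dgraph E \<Longrightarrow> hereditary E (fst Q) \<Longrightarrow> adm_le P Q \<Longrightarrow> adm_le (perp E Q) (perp E P)"
  using L0[of E "fst Q" "fst P" "snd P" "snd Q"] by simp

lemma L1': "wf_dgraph E \<Longrightarrow> hereditary E (fst P) \<Longrightarrow> snd P \<subseteq> breaking E (fst P) \<Longrightarrow> adm_le P (perp E (perp E P))"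
  using L1[of E "fst P" "snd P"] by simp

lemma antisym:
  assumes "adm_le P Q" "adm_le Q P" "snd P \<inter> fst P = {}" "snd Q \<inter> fst Q = {}"
  shows "P = Q"
proof -
  have f: "fst P = fst Q" using assms(1,2) unfolding adm_le_def by blast
  have "snd P \<subseteq> snd Q" using assms(1,3) f unfolding adm_le_def by blast
  moreover have "snd Q \<subseteq> snd P" using assms(2,4) f unfolding adm_le_def by blast
  ultimately show ?thesis using f by (simp add: prod_eq_iff)
qed

theorem proposition3p7:
  fixes E :: "('v, 'e) dgraph" and H S G T :: "'v set"
  assumes "wf_dgraph E"
    and "admissible E (H, S)" and "admissible E (G, T)"
  shows "(adm_le (H, S) (G, T) \<longrightarrow> adm_le (perp E (G, T)) (perp E (H, S)))
       \<and> adm_le (H, S) (perp E (perp E (H, S)))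
       \<and> (adm_le (H, S) (G, T) \<longrightarrow> adm_le (perp E (perp E (H, S))) (perp E (perp E (G, T))))
       \<and> perp E (perp E (perp E (H, S))) = perp E (H, S)"
proof -
  have wf: "wf_dgraph E" by fact
  have hH: "hereditary E H" "S \<subseteq> breaking E H" using assms(2) unfolding admissible_def by auto
  have hG: "hereditary E G" using assms(3) unfolding admissible_def by auto
  have p0: "adm_le (H, S) (G, T) \<longrightarrow> adm_le (perp E (G, T)) (perp E (H, S))"
    using L0[OF wf hG] by blast
  have p1: "adm_le (H, S) (perp E (perp E (H, S)))" using L1[OF wf hH] .
  have p2: "adm_le (H, S) (G, T) \<longrightarrow> adm_le (perp E (perp E (H, S))) (perp E (perp E (G, T)))"
    using p0 L0'[OF wf perp_hered] by blast
  define P1 where "P1 = perp E (H, S)"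
  have a: "adm_le P1 (perp E (perp E P1))"
    using L1'[OF wf perp_hered perp_break] unfolding P1_def .
  have b: "adm_le (perp E (perp E P1)) P1"
    using L0'[OF wf perp_hered p1] unfolding P1_def .
  have "perp E (perp E P1) = P1"
  proof (rule antisym[OF b a])
    show "snd (perp E (perp E P1)) \<inter> fst (perp E (perp E P1)) = {}"
      using break_disj[of E "fst (perp E (perp E P1))"] perp_break[of E "perp E P1"] by blast
    show "snd P1 \<inter> fst P1 = {}"
      using break_disj[of E "fst P1"] perp_break[of E "(H, S)"] unfolding P1_def by blast
  qed
  then show ?thesis using p0 p1 p2 unfolding P1_def by simp
qed

end
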